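(* Let $(t,\mu,\eta)$ be a pre-monad on a 0-cell $k$ in a 2-category $\mathcal K$. (1) The 2-cell $\mu\ast\eta t:t\Rightarrow t$ is idempotent. (2) Suppose there are a 1-cell $\widehat t:k\to k$ and 2-cells $\pi:t\Rightarrow\widehat t$ and $\iota:\widehat t\Rightarrow t$ with $\mu\ast\eta t=\iota\ast\pi$ and $\pi\ast\iota=\widehat t$ (the identity 2-cell). Then $(\widehat t,\ \widehat\mu:=\pi\ast\mu\ast\iota\iota,\ \widehat\eta:=\pi\ast\eta)$ is a monad in $\mathcal K$.
   Context: Conventions in a 2-category $\mathcal K$: horizontal composition and whiskering by juxtaposition in the order of functor composition; identity 1-cell of $k$ written $k$, identity 2-cell of $t$ written $t$; vertical composition $\ast$ with $\alpha\ast\beta$ meaning $\beta$ then $\alpha$; $\iota\iota$ denotes the horizontal composite of $\iota$ with itself. A pre-monad in $\mathcal K$ is a triple $(t,\mu,\eta)$ with $t:k\to k$ a 1-cell and $\mu:tt\Rightarrow t$, $\eta:k\Rightarrow t$ 2-cells satisfying $\mu\ast\mu t=\mu\ast t\mu$, $\mu\ast\eta t=\mu\ast t\eta$, $\mu\ast\eta\eta=\eta$ and $\mu\ast\mu t\ast\eta tt=\mu$. A monad is such a triple with $\mu$ associative and $\mu\ast\eta t=t=\mu\ast t\eta$. *)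

theory Defs
  imports Main
begin

text \<open>Conventions: comp1 g f is g after f; hcomp a b is the horizontal
composite in the order of functor composition (a after b); vcomp a b is
b then a.  Whiskering a 2-cell a by a 1-cell f is hcomp a (id2 f) or
hcomp (id2 f) a.\<close>

record ('o, 'a, 'c) two_cat =
  obs   :: "'o set"
  arrs  :: "'a set"
  cells :: "'c set"
  src   :: "'a \<Rightarrow> 'o"
  trg   :: "'a \<Rightarrow> 'o"
  id1   :: "'o \<Rightarrow> 'a"
  comp1 :: "'a \<Rightarrow> 'a \<Rightarrow> 'a"
  dom2  :: "'c \<Rightarrow> 'a"
  cod2  :: "'c \<Rightarrow> 'a"
  id2   :: "'a \<Rightarrow> 'c"
  vcomp :: "'c \<Rightarrow> 'c \<Rightarrow> 'c"
  hcomp :: "'c \<Rightarrow> 'c \<Rightarrow> 'c"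

definition two_category :: "('o, 'a, 'c, 'z) two_cat_scheme \<Rightarrow> bool" where
  "two_category K \<longleftrightarrow>
    \<comment> \<open>1-cells form a category\<close>
    (\<forall>f\<in>arrs K. src K f \<in> obs K \<and> trg K f \<in> obs K) \<and>
    (\<forall>x\<in>obs K. id1 K x \<in> arrs K \<and> src K (id1 K x) = x \<and> trg K (id1 K x) = x) \<and>
    (\<forall>f\<in>arrs K. \<forall>g\<in>arrs K. src K g = trg K f \<longrightarrow>
        comp1 K g f \<in> arrs K \<and> src K (comp1 K g f) = src K f \<and> trg K (comp1 K g f) = trg K g) \<and>
    (\<forall>f\<in>arrs K. comp1 K (id1 K (trg K f)) f = f \<and> comp1 K f (id1 K (src K f)) = f) \<and>
    (\<forall>f\<in>arrs K. \<forall>g\<in>arrs K. \<forall>h\<in>arrs K. src K g = trg K f \<longrightarrow> src K h = trg K g \<longrightarrow>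
        comp1 K h (comp1 K g f) = comp1 K (comp1 K h g) f) \<and>
    \<comment> \<open>2-cells: typing and vertical category structure\<close>
    (\<forall>a\<in>cells K. dom2 K a \<in> arrs K \<and> cod2 K a \<in> arrs K \<and>
        src K (dom2 K a) = src K (cod2 K a) \<and> trg K (dom2 K a) = trg K (cod2 K a)) \<and>
    (\<forall>f\<in>arrs K. id2 K f \<in> cells K \<and> dom2 K (id2 K f) = f \<and> cod2 K (id2 K f) = f) \<and>
    (\<forall>a\<in>cells K. \<forall>b\<in>cells K. dom2 K a = cod2 K b \<longrightarrow>
        vcomp K a b \<in> cells K \<and> dom2 K (vcomp K a b) = dom2 K b \<and> cod2 K (vcomp K a b) = cod2 K a) \<and>
    (\<forall>a\<in>cells K. vcomp K (id2 K (cod2 K a)) a = a \<and> vcomp K a (id2 K (dom2 K a)) = a) \<and>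
    (\<forall>a\<in>cells K. \<forall>b\<in>cells K. \<forall>c\<in>cells K. dom2 K a = cod2 K b \<longrightarrow> dom2 K b = cod2 K c \<longrightarrow>
        vcomp K a (vcomp K b c) = vcomp K (vcomp K a b) c) \<and>
    \<comment> \<open>horizontal composition\<close>
    (\<forall>a\<in>cells K. \<forall>b\<in>cells K. src K (dom2 K a) = trg K (dom2 K b) \<longrightarrow>
        hcomp K a b \<in> cells K \<and> dom2 K (hcomp K a b) = comp1 K (dom2 K a) (dom2 K b) \<and>
        cod2 K (hcomp K a b) = comp1 K (cod2 K a) (cod2 K b)) \<and>
    (\<forall>a\<in>cells K. hcomp K (id2 K (id1 K (trg K (dom2 K a)))) a = a \<and>
        hcomp K a (id2 K (id1 K (src K (dom2 K a)))) = a) \<and>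
    (\<forall>a\<in>cells K. \<forall>b\<in>cells K. \<forall>c\<in>cells K. src K (dom2 K a) = trg K (dom2 K b) \<longrightarrow>
        src K (dom2 K b) = trg K (dom2 K c) \<longrightarrow>
        hcomp K a (hcomp K b c) = hcomp K (hcomp K a b) c) \<and>
    (\<forall>f\<in>arrs K. \<forall>g\<in>arrs K. src K f = trg K g \<longrightarrow>
        hcomp K (id2 K f) (id2 K g) = id2 K (comp1 K f g)) \<and>
    \<comment> \<open>interchange law\<close>
    (\<forall>a\<in>cells K. \<forall>b\<in>cells K. \<forall>c\<in>cells K. \<forall>d\<in>cells K.
        dom2 K a = cod2 K b \<longrightarrow> dom2 K c = cod2 K d \<longrightarrow> src K (dom2 K a) = trg K (dom2 K c) \<longrightarrow>
        hcomp K (vcomp K a b) (vcomp K c d) = vcomp K (hcomp K a c) (hcomp K b d))"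

definition endo_data :: "('o, 'a, 'c, 'z) two_cat_scheme \<Rightarrow> 'o \<Rightarrow> 'a \<Rightarrow> 'c \<Rightarrow> 'c \<Rightarrow> bool" where
  "endo_data K k t mu eta \<longleftrightarrow>
     k \<in> obs K \<and> t \<in> arrs K \<and> src K t = k \<and> trg K t = k \<and>
     mu \<in> cells K \<and> dom2 K mu = comp1 K t t \<and> cod2 K mu = t \<and>
     eta \<in> cells K \<and> dom2 K eta = id1 K k \<and> cod2 K eta = t"

definition pre_monad :: "('o, 'a, 'c, 'z) two_cat_scheme \<Rightarrow> 'o \<Rightarrow> 'a \<Rightarrow> 'c \<Rightarrow> 'c \<Rightarrow> bool" where
  "pre_monad K k t mu eta \<longleftrightarrow>
     endo_data K k t mu eta \<and>
     vcomp K mu (hcomp K mu (id2 K t)) = vcomp K mu (hcomp K (id2 K t) mu) \<and>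
     vcomp K mu (hcomp K eta (id2 K t)) = vcomp K mu (hcomp K (id2 K t) eta) \<and>
     vcomp K mu (hcomp K eta eta) = eta \<and>
     vcomp K mu (vcomp K (hcomp K mu (id2 K t)) (hcomp K eta (id2 K (comp1 K t t)))) = mu"

definition monad :: "('o, 'a, 'c, 'z) two_cat_scheme \<Rightarrow> 'o \<Rightarrow> 'a \<Rightarrow> 'c \<Rightarrow> 'c \<Rightarrow> bool" where
  "monad K k t mu eta \<longleftrightarrow>
     endo_data K k t mu eta \<and>
     vcomp K mu (hcomp K mu (id2 K t)) = vcomp K mu (hcomp K (id2 K t) mu) \<and>
     vcomp K mu (hcomp K eta (id2 K t)) = id2 K t \<and>
     vcomp K mu (hcomp K (id2 K t) eta) = id2 K t"

definition idempotent2 :: "('o, 'a, 'c, 'z) two_cat_scheme \<Rightarrow> 'c \<Rightarrow> bool" where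
  "idempotent2 K e \<longleftrightarrow> e \<in> cells K \<and> dom2 K e = cod2 K e \<and> vcomp K e e = e"

end

theory Submission
  imports Defs
begin

context
  fixes K :: "('o, 'a, 'c, 'z) two_cat_scheme"
  assumes tc: "two_category K"
begin

lemma A_src: "f \<in> arrs K \<Longrightarrow> src K f \<in> obs K" and A_trg: "f \<in> arrs K \<Longrightarrow> trg K f \<in> obs K"
  using tc unfolding two_category_def by auto
lemma I1: "x \<in> obs K \<Longrightarrow> id1 K x \<in> arrs K"
  "x \<in> obs K \<Longrightarrow> src K (id1 K x) = x" "x \<in> obs K \<Longrightarrow> trg K (id1 K x) = x"
  using tc unfolding two_category_def by auto
lemma C1: "f \<in> arrs K \<Longrightarrow> g \<in> arrs K \<Longrightarrow> src K g = trg K f \<Longrightarrow> comp1 K g f \<in> arrs K"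
  "f \<in> arrs K \<Longrightarrow> g \<in> arrs K \<Longrightarrow> src K g = trg K f \<Longrightarrow> src K (comp1 K g f) = src K f"
  "f \<in> arrs K \<Longrightarrow> g \<in> arrs K \<Longrightarrow> src K g = trg K f \<Longrightarrow> trg K (comp1 K g f) = trg K g"
  using tc unfolding two_category_def by auto
lemma CL: "a \<in> cells K \<Longrightarrow> dom2 K a \<in> arrs K" "a \<in> cells K \<Longrightarrow> cod2 K a \<in> arrs K"
  "a \<in> cells K \<Longrightarrow> src K (cod2 K a) = src K (dom2 K a)"
  "a \<in> cells K \<Longrightarrow> trg K (cod2 K a) = trg K (dom2 K a)"
  using tc unfolding two_category_def by auto
lemma I2: "f \<in> arrs K \<Longrightarrow> id2 K f \<in> cells K" "f \<in> arrs K \<Longrightarrow> dom2 K (id2 K f) = f"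
  "f \<in> arrs K \<Longrightarrow> cod2 K (id2 K f) = f"
  using tc unfolding two_category_def by auto
lemma V: "a \<in> cells K \<Longrightarrow> b \<in> cells K \<Longrightarrow> dom2 K a = cod2 K b \<Longrightarrow> vcomp K a b \<in> cells K"
  "a \<in> cells K \<Longrightarrow> b \<in> cells K \<Longrightarrow> dom2 K a = cod2 K b \<Longrightarrow> dom2 K (vcomp K a b) = dom2 K b"
  "a \<in> cells K \<Longrightarrow> b \<in> cells K \<Longrightarrow> dom2 K a = cod2 K b \<Longrightarrow> cod2 K (vcomp K a b) = cod2 K a"
  using tc unfolding two_category_def by auto
lemma Vid: "a \<in> cells K \<Longrightarrow> vcomp K (id2 K (cod2 K a)) a = a"
  "a \<in> cells K \<Longrightarrow> vcomp K a (id2 K (dom2 K a)) = a"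
  using tc unfolding two_category_def by auto
lemma Vassoc: "a \<in> cells K \<Longrightarrow> b \<in> cells K \<Longrightarrow> c \<in> cells K \<Longrightarrow> dom2 K a = cod2 K b \<Longrightarrow> dom2 K b = cod2 K c \<Longrightarrow>
   vcomp K a (vcomp K b c) = vcomp K (vcomp K a b) c"
  using tc unfolding two_category_def by blast
lemma H: "a \<in> cells K \<Longrightarrow> b \<in> cells K \<Longrightarrow> src K (dom2 K a) = trg K (dom2 K b) \<Longrightarrow> hcomp K a b \<in> cells K"
  "a \<in> cells K \<Longrightarrow> b \<in> cells K \<Longrightarrow> src K (dom2 K a) = trg K (dom2 K b) \<Longrightarrow> dom2 K (hcomp K a b) = comp1 K (dom2 K a) (dom2 K b)"
  "a \<in> cells K \<Longrightarrow> b \<in> cells K \<Longrightarrow> src K (dom2 K a) = trg K (dom2 K b) \<Longrightarrow> cod2 K (hcomp K a b) = comp1 K (cod2 K a) (cod2 K b)"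
  using tc unfolding two_category_def by auto
lemma Hid: "a \<in> cells K \<Longrightarrow> hcomp K (id2 K (id1 K (trg K (dom2 K a)))) a = a"
  "a \<in> cells K \<Longrightarrow> hcomp K a (id2 K (id1 K (src K (dom2 K a)))) = a"
  using tc unfolding two_category_def by auto
lemma Hassoc: "a \<in> cells K \<Longrightarrow> b \<in> cells K \<Longrightarrow> c \<in> cells K \<Longrightarrow> src K (dom2 K a) = trg K (dom2 K b) \<Longrightarrow>
        src K (dom2 K b) = trg K (dom2 K c) \<Longrightarrow> hcomp K a (hcomp K b c) = hcomp K (hcomp K a b) c"
  using tc unfolding two_category_def by blast
lemma Hii: "f \<in> arrs K \<Longrightarrow> g \<in> arrs K \<Longrightarrow> src K f = trg K g \<Longrightarrow> hcomp K (id2 K f) (id2 K g) = id2 K (comp1 K f g)"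
  using tc unfolding two_category_def by blast
lemma XCH: "a \<in> cells K \<Longrightarrow> b \<in> cells K \<Longrightarrow> c \<in> cells K \<Longrightarrow> d \<in> cells K \<Longrightarrow>
   dom2 K a = cod2 K b \<Longrightarrow> dom2 K c = cod2 K d \<Longrightarrow> src K (dom2 K a) = trg K (dom2 K c) \<Longrightarrow>
   hcomp K (vcomp K a b) (vcomp K c d) = vcomp K (hcomp K a c) (hcomp K b d)"
  using tc unfolding two_category_def by blast

lemma W1: assumes "a \<in> cells K" "b \<in> cells K" "src K (dom2 K a) = trg K (dom2 K b)"
  shows "hcomp K a b = vcomp K (hcomp K a (id2 K (cod2 K b))) (hcomp K (id2 K (dom2 K a)) b)"
proof -
  have "hcomp K a b = hcomp K (vcomp K a (id2 K (dom2 K a))) (vcomp K (id2 K (cod2 K b)) b)"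
    using assms by (simp add: Vid)
  also have "\<dots> = vcomp K (hcomp K a (id2 K (cod2 K b))) (hcomp K (id2 K (dom2 K a)) b)"
    using assms by (intro XCH) (auto simp: I2 CL)
  finally show ?thesis .
qed

lemma W2: assumes "a \<in> cells K" "b \<in> cells K" "src K (dom2 K a) = trg K (dom2 K b)"
  shows "hcomp K a b = vcomp K (hcomp K (id2 K (cod2 K a)) b) (hcomp K a (id2 K (dom2 K b)))"
proof -
  have "hcomp K a b = hcomp K (vcomp K (id2 K (cod2 K a)) a) (vcomp K b (id2 K (dom2 K b)))"
    using assms by (simp add: Vid)
  also have "\<dots> = vcomp K (hcomp K (id2 K (cod2 K a)) b) (hcomp K a (id2 K (dom2 K b)))"
    using assms by (intro XCH) (auto simp: I2 CL)
  finally show ?thesis .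
qed

lemma CA: "f \<in> arrs K \<Longrightarrow> g \<in> arrs K \<Longrightarrow> h \<in> arrs K \<Longrightarrow> src K g = trg K f \<Longrightarrow> src K h = trg K g \<Longrightarrow>
        comp1 K h (comp1 K g f) = comp1 K (comp1 K h g) f"
proof -
  have "\<forall>f\<in>arrs K. \<forall>g\<in>arrs K. \<forall>h\<in>arrs K. src K g = trg K f \<longrightarrow> src K h = trg K g \<longrightarrow>
        comp1 K h (comp1 K g f) = comp1 K (comp1 K h g) f"
    apply (insert tc) unfolding two_category_def apply (elim conjE) apply assumption done
  then show "f \<in> arrs K \<Longrightarrow> g \<in> arrs K \<Longrightarrow> h \<in> arrs K \<Longrightarrow> src K g = trg K f \<Longrightarrow> src K h = trg K g \<Longrightarrow>
        comp1 K h (comp1 K g f) = comp1 K (comp1 K h g) f" by blast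
qed

lemma V4: assumes "a \<in> cells K" "b \<in> cells K" "c \<in> cells K" "d \<in> cells K"
  "dom2 K a = cod2 K b" "dom2 K b = cod2 K c" "dom2 K c = cod2 K d"
  shows "vcomp K (vcomp K a (vcomp K b c)) d = vcomp K (vcomp K a b) (vcomp K c d)"
  using assms by (simp add: Vassoc V)

lemmas S = CA I1 C1 CL I2 V H A_src A_trg

lemma main:
  assumes pm: "pre_monad K k t mu eta"
  shows "idempotent2 K (vcomp K mu (hcomp K eta (id2 K t))) \<and>
         (\<forall>th pi iota.
            th \<in> arrs K \<and> src K th = k \<and> trg K th = k \<and>
            pi \<in> cells K \<and> dom2 K pi = t \<and> cod2 K pi = th \<and>
            iota \<in> cells K \<and> dom2 K iota = th \<and> cod2 K iota = t \<and>
            vcomp K mu (hcomp K eta (id2 K t)) = vcomp K iota pi \<and>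
            vcomp K pi iota = id2 K th \<longrightarrow>
          monad K k th (vcomp K pi (vcomp K mu (hcomp K iota iota))) (vcomp K pi eta))"
proof -
  note ed = pm[unfolded pre_monad_def endo_data_def]
  have kO: "k \<in> obs K" and tA: "t \<in> arrs K" and st: "src K t = k" and trt: "trg K t = k"
    and muC: "mu \<in> cells K" and dmu: "dom2 K mu = comp1 K t t" and cmu: "cod2 K mu = t"
    and etC: "eta \<in> cells K" and det: "dom2 K eta = id1 K k" and cet: "cod2 K eta = t"
    using ed by auto
  have Ax: "vcomp K mu (hcomp K mu (id2 K t)) = vcomp K mu (hcomp K (id2 K t) mu)"
    and Ux: "vcomp K mu (hcomp K eta (id2 K t)) = vcomp K mu (hcomp K (id2 K t) eta)"
    and Ex: "vcomp K mu (hcomp K eta eta) = eta"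
    and Mx: "vcomp K mu (vcomp K (hcomp K mu (id2 K t)) (hcomp K eta (id2 K (comp1 K t t)))) = mu"
    using ed by auto
  have u1: "comp1 K (id1 K k) t = t" "comp1 K t (id1 K k) = t"
    using tc tA st trt unfolding two_category_def by metis+
  note B = kO tA st trt muC dmu cmu etC det cet u1
  define e where "e = vcomp K mu (hcomp K eta (id2 K t))"
  have eC: "e \<in> cells K" "dom2 K e = t" "cod2 K e = t" unfolding e_def using B by (simp_all add: S)
  have s1: "vcomp K (hcomp K eta (id2 K t)) mu = vcomp K (hcomp K (id2 K t) mu) (hcomp K eta (id2 K (comp1 K t t)))"
  proof -
    have "hcomp K eta mu = vcomp K (hcomp K (id2 K t) mu) (hcomp K eta (id2 K (comp1 K t t)))"
      using W2[of eta mu] B by (simp_all add: S)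
    moreover have "hcomp K eta mu = vcomp K (hcomp K eta (id2 K t)) (hcomp K (id2 K (id1 K k)) mu)"
      using W1[of eta mu] B by (simp_all add: S)
    moreover have "hcomp K (id2 K (id1 K k)) mu = mu" using Hid(1)[of mu] B by (simp_all add: S)
    ultimately show ?thesis by simp
  qed
  have s2: "vcomp K e mu = mu"
  proof -
    have "vcomp K e mu = vcomp K mu (vcomp K (hcomp K eta (id2 K t)) mu)"
      unfolding e_def using B by (subst Vassoc) (simp_all add: S)
    also have "\<dots> = vcomp K (vcomp K mu (hcomp K (id2 K t) mu)) (hcomp K eta (id2 K (comp1 K t t)))"
      unfolding s1 using B by (subst Vassoc) (simp_all add: S)
    also have "\<dots> = mu" unfolding Ax[symmetric] using B Mx by (subst Vassoc[symmetric]) (simp_all add: S)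
    finally show ?thesis .
  qed
  have idem: "vcomp K e e = e"
  proof -
    have "vcomp K e e = vcomp K (vcomp K e mu) (hcomp K eta (id2 K t))"
      using B eC by (subst (2) e_def, subst Vassoc) (simp_all add: S)
    then show ?thesis using s2 e_def by simp
  qed
  have s3: "vcomp K e eta = eta"
  proof -
    have h: "hcomp K eta eta = vcomp K (hcomp K eta (id2 K t)) (hcomp K (id2 K (id1 K k)) eta)"
      using W1[of eta eta] B by (simp_all add: S)
    have "hcomp K (id2 K (id1 K k)) eta = eta" using Hid(1)[of eta] B by (simp_all add: S)
    with h have "hcomp K eta eta = vcomp K (hcomp K eta (id2 K t)) eta" by simp
    moreover have "vcomp K e eta = vcomp K mu (vcomp K (hcomp K eta (id2 K t)) eta)"
      unfolding e_def using B by (subst Vassoc[symmetric]) (simp_all add: S)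
    ultimately have "vcomp K e eta = vcomp K mu (hcomp K eta eta)" by simp
    then show ?thesis using Ex by simp
  qed
  show ?thesis
  proof (intro conjI allI impI)
    show "idempotent2 K (vcomp K mu (hcomp K eta (id2 K t)))"
      unfolding idempotent2_def using idem eC e_def by simp
  next
    fix th pi iota
    assume a: "th \<in> arrs K \<and> src K th = k \<and> trg K th = k \<and>
            pi \<in> cells K \<and> dom2 K pi = t \<and> cod2 K pi = th \<and>
            iota \<in> cells K \<and> dom2 K iota = th \<and> cod2 K iota = t \<and>
            vcomp K mu (hcomp K eta (id2 K t)) = vcomp K iota pi \<and>
            vcomp K pi iota = id2 K th"
    then have thA: "th \<in> arrs K" and sth: "src K th = k" and tth: "trg K th = k"
      and piC: "pi \<in> cells K" and dpi: "dom2 K pi = t" and cpi: "cod2 K pi = th"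
      and ioC: "iota \<in> cells K" and dio: "dom2 K iota = th" and cio: "cod2 K iota = t"
      and eq1: "e = vcomp K iota pi" and eq2: "vcomp K pi iota = id2 K th"
      unfolding e_def by auto
    have u2: "comp1 K (id1 K k) th = th" "comp1 K th (id1 K k) = th"
      using tc thA sth tth unfolding two_category_def by metis+
    note C = B thA sth tth piC dpi cpi ioC dio cio u2 eC
    define X where "X = vcomp K mu (hcomp K iota iota)"
    have XC: "X \<in> cells K" "dom2 K X = comp1 K th th" "cod2 K X = t"
      unfolding X_def using C by (simp_all add: S)
    have pe: "vcomp K pi e = pi"
    proof -
      have "vcomp K pi e = vcomp K (vcomp K pi iota) pi" unfolding eq1 using C by (rule_tac Vassoc) (simp_all add: S)
      also have "\<dots> = pi" unfolding eq2 using Vid(1)[OF piC] cpi by simp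
      finally show ?thesis .
    qed
    have ie: "vcomp K e iota = iota"
    proof -
      have "vcomp K e iota = vcomp K iota (vcomp K pi iota)" unfolding eq1 using C by (rule_tac Vassoc[symmetric]) (simp_all add: S)
      also have "\<dots> = iota" unfolding eq2 using Vid(2)[OF ioC] dio by simp
      finally show ?thesis .
    qed
    have iX: "vcomp K iota (vcomp K pi X) = X"
    proof -
      have "vcomp K iota (vcomp K pi X) = vcomp K e X" unfolding eq1 using C XC by (rule_tac Vassoc) (simp_all add: S)
      also have "\<dots> = vcomp K (vcomp K e mu) (hcomp K iota iota)" unfolding X_def using C by (rule_tac Vassoc) (simp_all add: S)
      also have "\<dots> = X" unfolding s2 X_def ..
      finally show ?thesis .
    qed
    have iE: "vcomp K iota (vcomp K pi eta) = eta"
    proof -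
      have "vcomp K iota (vcomp K pi eta) = vcomp K e eta" unfolding eq1 using C by (rule_tac Vassoc) (simp_all add: S)
      then show ?thesis using s3 by simp
    qed
    have fin: "vcomp K (vcomp K pi mu) (vcomp K (hcomp K eta (id2 K t)) iota) = id2 K th"
    proof -
      have "vcomp K (vcomp K pi mu) (vcomp K (hcomp K eta (id2 K t)) iota) = vcomp K pi (vcomp K e iota)"
        unfolding e_def using C by (subst Vassoc[symmetric], simp_all add: S, subst Vassoc, simp_all add: S)
      then show ?thesis using ie eq2 by simp
    qed
    have etaC': "vcomp K pi eta \<in> cells K" "dom2 K (vcomp K pi eta) = id1 K k" "cod2 K (vcomp K pi eta) = th"
      using C by (simp_all add: S)
    have muC': "vcomp K pi X \<in> cells K" "dom2 K (vcomp K pi X) = comp1 K th th" "cod2 K (vcomp K pi X) = th"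
      using C XC by (simp_all add: S)
    have b1: "vcomp K (hcomp K iota iota) (hcomp K (vcomp K pi eta) (id2 K th)) = hcomp K eta iota"
    proof -
      have "vcomp K (hcomp K iota iota) (hcomp K (vcomp K pi eta) (id2 K th))
          = hcomp K (vcomp K iota (vcomp K pi eta)) (vcomp K iota (id2 K th))"
        using C etaC' by (rule_tac XCH[symmetric]) (simp_all add: S)
      also have "\<dots> = hcomp K eta iota" using iE Vid(2)[OF ioC] dio by simp
      finally show ?thesis .
    qed
    have b2: "hcomp K eta iota = vcomp K (hcomp K eta (id2 K t)) iota"
    proof -
      have "hcomp K eta iota = vcomp K (hcomp K eta (id2 K t)) (hcomp K (id2 K (id1 K k)) iota)"
        using W1[of eta iota] C by (simp_all add: S)
      moreover have "hcomp K (id2 K (id1 K k)) iota = iota" using Hid(1)[of iota] C by (simp_all add: S)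
      ultimately show ?thesis by simp
    qed
    have c1: "vcomp K (hcomp K iota iota) (hcomp K (id2 K th) (vcomp K pi eta)) = hcomp K iota eta"
    proof -
      have "vcomp K (hcomp K iota iota) (hcomp K (id2 K th) (vcomp K pi eta))
          = hcomp K (vcomp K iota (id2 K th)) (vcomp K iota (vcomp K pi eta))"
        using C etaC' by (rule_tac XCH[symmetric]) (simp_all add: S)
      also have "\<dots> = hcomp K iota eta" using iE Vid(2)[OF ioC] dio by simp
      finally show ?thesis .
    qed
    have c2: "hcomp K iota eta = vcomp K (hcomp K (id2 K t) eta) iota"
    proof -
      have "hcomp K iota eta = vcomp K (hcomp K (id2 K t) eta) (hcomp K iota (id2 K (id1 K k)))"
        using W2[of iota eta] C by (simp_all add: S)
      moreover have "hcomp K iota (id2 K (id1 K k)) = iota" using Hid(2)[of iota] C by (simp_all add: S)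
      ultimately show ?thesis by simp
    qed
    have mb: "vcomp K (vcomp K pi X) (hcomp K (vcomp K pi eta) (id2 K th)) = id2 K th"
    proof -
      have "vcomp K (vcomp K pi X) (hcomp K (vcomp K pi eta) (id2 K th))
          = vcomp K (vcomp K pi mu) (vcomp K (hcomp K iota iota) (hcomp K (vcomp K pi eta) (id2 K th)))"
        unfolding X_def using C etaC' by (rule_tac V4) (simp_all add: S)
      then show ?thesis using b1 b2 fin by simp
    qed
    have mc: "vcomp K (vcomp K pi X) (hcomp K (id2 K th) (vcomp K pi eta)) = id2 K th"
    proof -
      have "vcomp K (vcomp K pi X) (hcomp K (id2 K th) (vcomp K pi eta))
          = vcomp K (vcomp K pi mu) (vcomp K (hcomp K iota iota) (hcomp K (id2 K th) (vcomp K pi eta)))"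
        unfolding X_def using C etaC' by (rule_tac V4) (simp_all add: S)
      also have "\<dots> = vcomp K (vcomp K pi mu) (vcomp K (hcomp K (id2 K t) eta) iota)" using c1 c2 by simp
      also have "\<dots> = vcomp K (vcomp K pi mu) (vcomp K (hcomp K eta (id2 K t)) iota)"
      proof -
        have "vcomp K mu (vcomp K (hcomp K (id2 K t) eta) iota) = vcomp K mu (vcomp K (hcomp K eta (id2 K t)) iota)"
          using C Ux by (subst (1 2) Vassoc) (simp_all add: S)
        then show ?thesis using C by (subst (1 2) Vassoc[symmetric]) (simp_all add: S)
      qed
      finally show ?thesis using fin by simp
    qed
    have ma: "vcomp K (vcomp K pi X) (hcomp K (vcomp K pi X) (id2 K th))
            = vcomp K (vcomp K pi X) (hcomp K (id2 K th) (vcomp K pi X))"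
    proof -
      have IIC: "hcomp K iota iota \<in> cells K" "dom2 K (hcomp K iota iota) = comp1 K th th"
        "cod2 K (hcomp K iota iota) = comp1 K t t" using C by (simp_all add: S)
      have L1: "vcomp K (vcomp K pi X) (hcomp K (vcomp K pi X) (id2 K th))
          = vcomp K (vcomp K pi mu) (vcomp K (hcomp K iota iota) (hcomp K (vcomp K pi X) (id2 K th)))"
        unfolding X_def using C muC'[unfolded X_def] by (rule_tac V4) (simp_all add: S)
      have L2: "vcomp K (hcomp K iota iota) (hcomp K (vcomp K pi X) (id2 K th)) = hcomp K X iota"
      proof -
        have "vcomp K (hcomp K iota iota) (hcomp K (vcomp K pi X) (id2 K th))
          = hcomp K (vcomp K iota (vcomp K pi X)) (vcomp K iota (id2 K th))"
          using C muC' by (rule_tac XCH[symmetric]) (simp_all add: S)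
        then show ?thesis using iX Vid(2)[OF ioC] dio by simp
      qed
      have L3: "hcomp K X iota = vcomp K (hcomp K mu (id2 K t)) (hcomp K (hcomp K iota iota) iota)"
      proof -
        have "hcomp K X iota = hcomp K (vcomp K mu (hcomp K iota iota)) (vcomp K (id2 K t) iota)"
          unfolding X_def using Vid(1)[OF ioC] cio by simp
        also have "\<dots> = vcomp K (hcomp K mu (id2 K t)) (hcomp K (hcomp K iota iota) iota)"
          using C IIC by (rule_tac XCH) (simp_all add: S)
        finally show ?thesis .
      qed
      have R2: "vcomp K (hcomp K iota iota) (hcomp K (id2 K th) (vcomp K pi X)) = hcomp K iota X"
      proof -
        have "vcomp K (hcomp K iota iota) (hcomp K (id2 K th) (vcomp K pi X))
          = hcomp K (vcomp K iota (id2 K th)) (vcomp K iota (vcomp K pi X))"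
          using C muC' by (rule_tac XCH[symmetric]) (simp_all add: S)
        then show ?thesis using iX Vid(2)[OF ioC] dio by simp
      qed
      have R3: "hcomp K iota X = vcomp K (hcomp K (id2 K t) mu) (hcomp K iota (hcomp K iota iota))"
      proof -
        have "hcomp K iota X = hcomp K (vcomp K (id2 K t) iota) (vcomp K mu (hcomp K iota iota))"
          unfolding X_def using Vid(1)[OF ioC] cio by simp
        also have "\<dots> = vcomp K (hcomp K (id2 K t) mu) (hcomp K iota (hcomp K iota iota))"
          using C IIC by (rule_tac XCH) (simp_all add: S)
        finally show ?thesis .
      qed
      have R1: "vcomp K (vcomp K pi X) (hcomp K (id2 K th) (vcomp K pi X))
          = vcomp K (vcomp K pi mu) (vcomp K (hcomp K iota iota) (hcomp K (id2 K th) (vcomp K pi X)))"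
        unfolding X_def using C muC'[unfolded X_def] by (rule_tac V4) (simp_all add: S)
      have HA: "hcomp K iota (hcomp K iota iota) = hcomp K (hcomp K iota iota) iota"
        using C by (rule_tac Hassoc) (simp_all add: S)
      have Lf: "vcomp K (vcomp K pi mu) (vcomp K (hcomp K mu (id2 K t)) (hcomp K (hcomp K iota iota) iota))
        = vcomp K (vcomp K pi (vcomp K mu (hcomp K mu (id2 K t)))) (hcomp K (hcomp K iota iota) iota)"
        using C IIC by (rule_tac V4[symmetric]) (simp_all add: S)
      have Rf: "vcomp K (vcomp K pi mu) (vcomp K (hcomp K (id2 K t) mu) (hcomp K (hcomp K iota iota) iota))
        = vcomp K (vcomp K pi (vcomp K mu (hcomp K (id2 K t) mu))) (hcomp K (hcomp K iota iota) iota)"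
        using C IIC by (rule_tac V4[symmetric]) (simp_all add: S)
      show ?thesis using L1 L2 L3 R1 R2 R3 HA Lf Rf Ax by simp
    qed
    show "monad K k th (vcomp K pi (vcomp K mu (hcomp K iota iota))) (vcomp K pi eta)"
      unfolding monad_def endo_data_def X_def[symmetric] using ma mb mc muC' etaC' C by simp
  qed
qed

end

theorem lemma2p2:
  fixes K :: "('o, 'a, 'c, 'z) two_cat_scheme"
  assumes "two_category K"
    and "pre_monad K k t mu eta"
  shows "idempotent2 K (vcomp K mu (hcomp K eta (id2 K t))) \<and>
         (\<forall>th pi iota.
            th \<in> arrs K \<and> src K th = k \<and> trg K th = k \<and>
            pi \<in> cells K \<and> dom2 K pi = t \<and> cod2 K pi = th \<and>
            iota \<in> cells K \<and> dom2 K iota = th \<and> cod2 K iota = t \<and>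
            vcomp K mu (hcomp K eta (id2 K t)) = vcomp K iota pi \<and>
            vcomp K pi iota = id2 K th \<longrightarrow>
          monad K k th (vcomp K pi (vcomp K mu (hcomp K iota iota))) (vcomp K pi eta))"
  using main[OF assms(1) assms(2)] .

end
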